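(* For every $\omega\in\mathbb{R}$ and every $a\in\mathbb{R}$ there exists $b_0>0$ such that for all $b\ge b_0$, $\omega$ lies in the interior of the rotation interval $I(F_{a,b})$.
   Context: $F_{a,b}(x)=x+a+\frac{b}{2\pi}\sin(2\pi x)$ for $(a,b)\in\mathbb{R}\times[0,\infty)$. For such a lift $F$, with $\underline{\rho}_F(x)=\liminf_{n}F^n(x)/n$ and $\overline{\rho}_F(x)=\limsup_{n}F^n(x)/n$, the rotation interval is $I(F)=[\inf_x\underline{\rho}_F(x),\ \sup_x\overline{\rho}_F(x)]$. *)

theory Defs
  imports "HOL-Analysis.Analysis" "HOL-Library.Extended_Real"
begin

definition F_std :: "real \<Rightarrow> real \<Rightarrow> real \<Rightarrow> real" where
  "F_std a b x = x + a + b / (2 * pi) * sin (2 * pi * x)"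

definition rot_lower_pt :: "(real \<Rightarrow> real) \<Rightarrow> real \<Rightarrow> ereal" where
  "rot_lower_pt F x = liminf (\<lambda>n::nat. ereal ((F ^^ n) x / real n))"

definition rot_upper_pt :: "(real \<Rightarrow> real) \<Rightarrow> real \<Rightarrow> ereal" where
  "rot_upper_pt F x = limsup (\<lambda>n::nat. ereal ((F ^^ n) x / real n))"

definition rotation_interval :: "(real \<Rightarrow> real) \<Rightarrow> real set" where
  "rotation_interval F =
     {r. (INF x. rot_lower_pt F x) \<le> ereal r \<and> ereal r \<le> (SUP x. rot_upper_pt F x)}"

end

theory Submission
  imports Defs
begin

lemma F_shift: "F_std a b (x + of_int m) = F_std a b x + of_int m"
proof -
  have "sin (2 * pi * (x + of_int m)) = sin (2 * pi * x + (2 * pi) * of_int m)"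
    by (simp add: algebra_simps)
  also have "\<dots> = sin (2 * pi * x)" by (simp add: sin_add)
  finally show ?thesis unfolding F_std_def by simp
qed

lemma F_iter:
  assumes "F_std a b x = x + of_int k"
  shows "(F_std a b ^^ n) x = x + of_int (int n * k)"
proof (induction n)
  case 0 then show ?case by simp
next
  case (Suc n)
  have "(F_std a b ^^ Suc n) x = F_std a b (x + of_int (int n * k))" using Suc by simp
  also have "\<dots> = x + of_int k + of_int (int n * k)" using F_shift[of a b x "int n * k"] assms by simp
  also have "\<dots> = x + of_int (int (Suc n) * k)" by (simp add: algebra_simps)
  finally show ?case .
qed

lemma rot_periodic:
  assumes "F_std a b x = x + of_int k"
  shows "rot_lower_pt (F_std a b) x = ereal (of_int k)"
    "rot_upper_pt (F_std a b) x = ereal (of_int k)"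
proof -
  have ev: "eventually (\<lambda>n. x / real n + of_int k = (F_std a b ^^ n) x / real n) sequentially"
    using eventually_gt_at_top[of "0::nat"]
    by eventually_elim (simp add: F_iter[OF assms] field_simps)
  have "(\<lambda>n. x / real n + of_int k) \<longlonglongrightarrow> 0 + of_int k"
    by (intro tendsto_add lim_const_over_n tendsto_const)
  then have "(\<lambda>n. (F_std a b ^^ n) x / real n) \<longlonglongrightarrow> of_int k"
    using tendsto_cong[OF ev] by simp
  then have L: "(\<lambda>n. ereal ((F_std a b ^^ n) x / real n)) \<longlonglongrightarrow> ereal (of_int k)"
    by (intro tendsto_intros)
  show "rot_lower_pt (F_std a b) x = ereal (of_int k)"
    unfolding rot_lower_pt_def by (rule lim_imp_Liminf[OF _ L]) simp
  show "rot_upper_pt (F_std a b) x = ereal (of_int k)"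
    unfolding rot_upper_pt_def by (rule lim_imp_Limsup[OF _ L]) simp
qed

lemma exists_fixed:
  assumes b: "b > 0" and k: "\<bar>of_int k - a\<bar> \<le> b / (2 * pi)"
  shows "\<exists>x. F_std a b x = x + of_int k"
proof -
  define s where "s = (of_int k - a) * (2 * pi) / b"
  have "\<bar>s\<bar> = \<bar>of_int k - a\<bar> * (2 * pi) / b" unfolding s_def using b
    by (simp add: abs_mult abs_divide)
  also have "\<dots> \<le> 1" using k b pi_gt_zero by (simp add: field_simps)
  finally have "\<bar>s\<bar> \<le> 1" .
  then have s1: "-1 \<le> s" "s \<le> 1" by auto
  define x where "x = arcsin s / (2 * pi)"
  have "sin (2 * pi * x) = s" unfolding x_def using s1 by (simp add: sin_arcsin)
  then have "F_std a b x = x + a + b / (2 * pi) * s" unfolding F_std_def by simp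
  also have "\<dots> = x + of_int k" unfolding s_def using b by (simp add: field_simps)
  finally show ?thesis by blast
qed

theorem lemma3p5p1:
  fixes \<omega> a :: real
  shows "\<exists>b0 > 0. \<forall>b \<ge> b0. \<omega> \<in> interior (rotation_interval (F_std a b))"
proof -
  define k1 where "k1 = \<lfloor>\<omega>\<rfloor> - 1"
  define k2 where "k2 = \<lfloor>\<omega>\<rfloor> + 1"
  have w1: "of_int k1 < \<omega>" "\<omega> < of_int k2" unfolding k1_def k2_def by linarith+
  have kb1: "\<bar>of_int k1 - a\<bar> \<le> \<bar>\<omega>\<bar> + \<bar>a\<bar> + 2" unfolding k1_def by linarith
  have kb2: "\<bar>of_int k2 - a\<bar> \<le> \<bar>\<omega>\<bar> + \<bar>a\<bar> + 2" unfolding k2_def by linarith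
  define b0 where "b0 = 2 * pi * (\<bar>\<omega>\<bar> + \<bar>a\<bar> + 2)"
  have b0: "b0 > 0" unfolding b0_def using pi_gt_zero by (intro mult_pos_pos) auto
  show ?thesis
  proof (intro exI[of _ b0] conjI allI impI b0)
    fix b assume bb: "b \<ge> b0"
    then have bpos: "b > 0" using b0 by simp
    have "\<bar>\<omega>\<bar> + \<bar>a\<bar> + 2 \<le> b / (2 * pi)" using bb unfolding b0_def
      using pi_gt_zero by (simp add: field_simps)
    then obtain x1 x2 where x1: "F_std a b x1 = x1 + of_int k1"
      and x2: "F_std a b x2 = x2 + of_int k2"
      using exists_fixed[OF bpos] kb1 kb2 by (meson order_trans)
    have I: "(INF x. rot_lower_pt (F_std a b) x) \<le> ereal (of_int k1)"
      using INF_lower[of x1 UNIV "rot_lower_pt (F_std a b)"] rot_periodic(1)[OF x1] by simp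
    have S: "ereal (of_int k2) \<le> (SUP x. rot_upper_pt (F_std a b) x)"
      using SUP_upper[of x2 UNIV "rot_upper_pt (F_std a b)"] rot_periodic(2)[OF x2] by simp
    have sub: "{of_int k1 <..< of_int k2} \<subseteq> rotation_interval (F_std a b)"
    proof
      fix r assume "r \<in> {of_int k1 <..< (of_int k2::real)}"
      then have "ereal (of_int k1) \<le> ereal r" "ereal r \<le> ereal (of_int k2)" by auto
      then show "r \<in> rotation_interval (F_std a b)"
        unfolding rotation_interval_def using I S order_trans by blast
    qed
    have "{of_int k1 <..< (of_int k2::real)} \<subseteq> interior (rotation_interval (F_std a b))"
      by (rule interior_maximal[OF sub]) simp
    then show "\<omega> \<in> interior (rotation_interval (F_std a b))" using w1 by auto
  qed
qed

end
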